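(* For every $t\ge0$, the function \[\alpha\mapsto\inf_{\chi\in\mathcal L^0_{\le1}}\big\{\tilde S^\alpha_t\chi(0)-\psi^\alpha_*(\chi)\big\}\] is Lipschitz on $\mathbb{R}_+$.
   Context: Standing assumptions: $D\ge1$, $\xi:\mathbb{R}^{D\times D}\to\mathbb{R}$ smooth with absolutely convergent power series, convex on the positive semidefinite cone $S^D_+$; $P_1$ compactly supported probability measure on $\mathbb{R}^D$. $S^D$: symmetric matrices with Frobenius product and norm $|\cdot|$, $B(0,1)$ its closed unit ball, $\nabla$ the Frobenius gradient. For $\alpha\ge0$: $\xi_\alpha(x)=\xi(x)+\alpha|x|^2$, $\theta_\alpha(x)=x\cdot\nabla\xi_\alpha(x)-\xi_\alpha(x)$, $\mathcal P^\uparrow_{\xi_\alpha}=\{\mathrm{Law}(\nabla\xi_\alpha(\mathsf q(U)))\}$ with $U$ uniform on $[0,1)$ and $\mathsf q:[0,1)\to S^D_+$ right-continuous nondecreasing ($\mathsf q(v)-\mathsf q(u)\in S^D_+$ for $u\le v$), $|\mathsf q|\le1$ (these are monotone measures on $S^D_+$, on which $\psi$ is defined). $\mathcal L^0_{\le1}$: $1$-Lipschitz $\chi:S^D_+\to\mathbb{R}$ with $\chi(0)=0$. $\tilde S^\alpha_t\chi(0)=\sup_{x\in B(0,1)\cap S^D_+}\{\chi(t\nabla\xi_\alpha(x))-t\theta_\alpha(x)\}$, $\psi^\alpha_*(\chi)=\inf_{\mu\in\mathcal P^\uparrow_{\xi_\alpha}}\{\int\chi\,\mathrm d\mu-\psi(\mu)\}$.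 The functional $\psi$ on monotone measures (laws of $\mathsf q(U)$ for nondecreasing $\mathsf q$) with finite first moment: for finitely supported $\mu=\sum_{k=0}^K(\zeta_{k+1}-\zeta_k)\delta_{q_k}$, $0=\zeta_0<\dots<\zeta_{K+1}=1$, $0=q_{-1}\le q_0<\dots<q_K$ in $S^D_+$, $\psi(\mu)=-\mathbb{E}\log\int\sum_{\alpha\in\mathbb{N}^K}\exp(\sum_{k=0}^K(2q_k-2q_{k-1})^{1/2}z_{\alpha|_k}\cdot\sigma-q_K\cdot\sigma\sigma^\intercal)v_\alpha\,\mathrm dP_1(\sigma)$, where $(z_\beta)$ are i.i.d. standard Gaussian vectors in $\mathbb{R}^D$ indexed by the vertices of the tree $\bigcup_{k=0}^K\mathbb{N}^k$ ($\alpha|_k$ = ancestor of the leaf $\alpha$ at depth $k$) and $(v_\alpha)$ is the Poisson–Dirichlet cascade: children of each depth-$k$ vertex $\beta$ ($k<K$) carry decreasingly ordered points $u_{\beta n}$ of an independent Poisson process with intensity $\zeta_{k+1}x^{-1-\zeta_{k+1}}\mathrm dx$, $w_\alpha=\prod_{k=1}^Ku_{\alpha|_k}$, $v_\alpha=w_\alpha/\sum_\beta w_\beta$; $\psi$ is then extended by continuity, being $1$-Lipschitz for the $1$-Wasserstein distance. *)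

theory Defs
  imports "HOL-Analysis.Analysis" "HOL-Probability.Probability"
begin

text \<open>D x D real matrices are modelled as real^'n^'n ('n a finite type with CARD('n) = D).
 The Frobenius product is the inner product (\<bullet>) on this type and the Frobenius norm is norm.\<close>

definition psd :: "(real^'n^'n) set" where
  "psd = {A. transpose A = A \<and> (\<forall>v. v \<bullet> (A *v v) \<ge> 0)}"

definition loewner_le :: "real^'n^'n \<Rightarrow> real^'n^'n \<Rightarrow> bool" where
  "loewner_le A B \<longleftrightarrow> B - A \<in> psd"

definition monom_mat :: "real^'n^'n \<Rightarrow> ('n \<times> 'n \<Rightarrow> nat) \<Rightarrow> real" where
  "monom_mat x k = (\<Prod>p\<in>UNIV. (x $ fst p $ snd p) ^ k p)"

text \<open>Full Frobenius gradient on R^{DxD} (matrix of partial derivatives) and the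
 Frobenius gradient on S^D (its symmetric part).\<close>
definition full_grad :: "(real^'n^'n \<Rightarrow> real) \<Rightarrow> real^'n^'n \<Rightarrow> real^'n^'n" where
  "full_grad f x = (\<chi> i j. frechet_derivative f (at x) (axis i (axis j 1)))"

definition sgrad :: "(real^'n^'n \<Rightarrow> real) \<Rightarrow> real^'n^'n \<Rightarrow> real^'n^'n" where
  "sgrad f x = (1/2) *\<^sub>R (full_grad f x + transpose (full_grad f x))"

definition xi_a :: "(real^'n^'n \<Rightarrow> real) \<Rightarrow> real \<Rightarrow> real^'n^'n \<Rightarrow> real" where
  "xi_a \<xi> \<alpha> x = \<xi> x + \<alpha> * (norm x)\<^sup>2"

definition theta_a :: "(real^'n^'n \<Rightarrow> real) \<Rightarrow> real \<Rightarrow> real^'n^'n \<Rightarrow> real" where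
  "theta_a \<xi> \<alpha> x = x \<bullet> sgrad (xi_a \<xi> \<alpha>) x - xi_a \<xi> \<alpha> x"

definition unifU :: "real measure" where
  "unifU = uniform_measure lborel {0..<1}"

definition mono_paths :: "(real \<Rightarrow> real^'n^'n) set" where
  "mono_paths = {q. q \<in> borel_measurable borel \<and>
      (\<forall>u. u \<notin> {0..<1} \<longrightarrow> q u = 0) \<and>
      (\<forall>u\<in>{0..<1}. q u \<in> psd) \<and>
      (\<forall>u v. 0 \<le> u \<longrightarrow> u \<le> v \<longrightarrow> v < 1 \<longrightarrow> loewner_le (q u) (q v)) \<and>
      (\<forall>u\<in>{0..<1}. continuous (at_right u) q)}"

text \<open>Monotone measures with finite first moment (domain of psi).\<close>
definition monotone_measures :: "(real^'n^'n) measure set" where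
  "monotone_measures = {distr unifU borel q | q. q \<in> mono_paths \<and> integrable unifU (\<lambda>u. norm (q u))}"

definition P_up :: "(real^'n^'n \<Rightarrow> real) \<Rightarrow> real \<Rightarrow> (real^'n^'n) measure set" where
  "P_up \<xi> \<alpha> = {distr unifU borel (\<lambda>u. sgrad (xi_a \<xi> \<alpha>) (q u)) | q.
       q \<in> mono_paths \<and> (\<forall>u. norm (q u) \<le> 1)}"

definition W1 :: "(real^'n^'n) measure \<Rightarrow> (real^'n^'n) measure \<Rightarrow> ennreal" where
  "W1 \<mu> \<nu> = (INF \<pi>\<in>{\<pi>. prob_space \<pi> \<and> sets \<pi> = sets (borel \<Otimes>\<^sub>M borel) \<and>
        distr \<pi> borel fst = \<mu> \<and> distr \<pi> borel snd = \<nu>}.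
      \<integral>\<^sup>+ z. ennreal (norm (fst z - snd z)) \<partial>\<pi>)"

definition Lip0 :: "(real^'n^'n \<Rightarrow> real) set" where
  "Lip0 = {g. 1-lipschitz_on psd g \<and> g 0 = 0 \<and> (\<forall>x. x \<notin> psd \<longrightarrow> g x = 0)}"

definition S_tilde :: "(real^'n^'n \<Rightarrow> real) \<Rightarrow> real \<Rightarrow> real \<Rightarrow> (real^'n^'n \<Rightarrow> real) \<Rightarrow> real" where
  "S_tilde \<xi> \<alpha> t g = (SUP x\<in>cball 0 1 \<inter> psd. g (t *\<^sub>R sgrad (xi_a \<xi> \<alpha>) x) - t * theta_a \<xi> \<alpha> x)"

definition psi_star :: "((real^'n^'n) measure \<Rightarrow> real) \<Rightarrow> (real^'n^'n \<Rightarrow> real) \<Rightarrow> real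
    \<Rightarrow> (real^'n^'n \<Rightarrow> real) \<Rightarrow> real" where
  "psi_star \<psi> \<xi> \<alpha> g = (INF \<mu>\<in>P_up \<xi> \<alpha>. integral\<^sup>L \<mu> g - \<psi> \<mu>)"

end

theory Submission
  imports Defs
begin

lemma SUP_diff_le:
  fixes f h :: "'a \<Rightarrow> real"
  assumes "A \<noteq> {}" "bdd_above (f ` A)" "\<And>x. x \<in> A \<Longrightarrow> \<bar>f x - h x\<bar> \<le> c"
  shows "bdd_above (h ` A)" "\<bar>(SUP x\<in>A. f x) - (SUP x\<in>A. h x)\<bar> \<le> c"
proof -
  obtain B where B: "\<And>x. x \<in> A \<Longrightarrow> f x \<le> B" using assms(2) by (auto simp: bdd_above_def)
  show hb: "bdd_above (h ` A)"
    by (rule bdd_aboveI2[where M="B + c"]) (use B assms(3) in force)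
  have "(SUP x\<in>A. f x) \<le> (SUP x\<in>A. h x) + c"
  proof (rule cSUP_least[OF assms(1)])
    fix x assume x: "x \<in> A"
    have "h x \<le> (SUP x\<in>A. h x)" by (rule cSUP_upper[OF x hb])
    then show "f x \<le> (SUP x\<in>A. h x) + c" using assms(3)[OF x] by linarith
  qed
  moreover have "(SUP x\<in>A. h x) \<le> (SUP x\<in>A. f x) + c"
  proof (rule cSUP_least[OF assms(1)])
    fix x assume x: "x \<in> A"
    have "f x \<le> (SUP x\<in>A. f x)" by (rule cSUP_upper[OF x assms(2)])
    then show "h x \<le> (SUP x\<in>A. f x) + c" using assms(3)[OF x] by linarith
  qed
  ultimately show "\<bar>(SUP x\<in>A. f x) - (SUP x\<in>A. h x)\<bar> \<le> c" by linarith
qed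

lemma INF_diff_le:
  fixes f h :: "'a \<Rightarrow> real"
  assumes "A \<noteq> {}" "bdd_below (f ` A)" "\<And>x. x \<in> A \<Longrightarrow> \<bar>f x - h x\<bar> \<le> c"
  shows "bdd_below (h ` A)" "\<bar>(INF x\<in>A. f x) - (INF x\<in>A. h x)\<bar> \<le> c"
proof -
  obtain B where B: "\<And>x. x \<in> A \<Longrightarrow> B \<le> f x" using assms(2) by (auto simp: bdd_below_def)
  show hb: "bdd_below (h ` A)"
    by (rule bdd_belowI2[where m="B - c"]) (use B assms(3) in force)
  have "(INF x\<in>A. h x) - c \<le> (INF x\<in>A. f x)"
  proof (rule cINF_greatest[OF assms(1)])
    fix x assume x: "x \<in> A"
    have "(INF x\<in>A. h x) \<le> h x" by (rule cINF_lower[OF hb x])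
    then show "(INF x\<in>A. h x) - c \<le> f x" using assms(3)[OF x] by linarith
  qed
  moreover have "(INF x\<in>A. f x) - c \<le> (INF x\<in>A. h x)"
  proof (rule cINF_greatest[OF assms(1)])
    fix x assume x: "x \<in> A"
    have "(INF x\<in>A. f x) \<le> f x" by (rule cINF_lower[OF assms(2) x])
    then show "(INF x\<in>A. f x) - c \<le> h x" using assms(3)[OF x] by linarith
  qed
  ultimately show "\<bar>(INF x\<in>A. f x) - (INF x\<in>A. h x)\<bar> \<le> c" by linarith
qed

lemma psd_sym: "(A::real^'n^'n) \<in> psd \<Longrightarrow> transpose A = A" by (simp add: psd_def)
lemma psd_0: "(0::real^'n^'n) \<in> psd" by (simp add: psd_def vec_eq_iff transpose_def)
lemma psd_add: "(A::real^'n^'n) \<in> psd \<Longrightarrow> B \<in> psd \<Longrightarrow> A + B \<in> psd"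
  by (auto simp: psd_def vec_eq_iff transpose_def matrix_vector_mult_add_rdistrib inner_add_right
      intro: add_nonneg_nonneg)
lemma psd_scale: "(A::real^'n^'n) \<in> psd \<Longrightarrow> c \<ge> 0 \<Longrightarrow> c *\<^sub>R A \<in> psd"
proof -
  assume "A \<in> psd" "c \<ge> 0"
  then show ?thesis
    unfolding psd_def
  proof (safe)
    show "transpose (c *\<^sub>R A) = c *\<^sub>R A" using \<open>A \<in> psd\<close> by (simp add: transpose_scalar psd_def)
    fix v :: "real^'n"
    have "(c *\<^sub>R A) *v v = c *\<^sub>R (A *v v)" by (rule scaleR_matrix_vector_assoc[symmetric])
    then show "0 \<le> v \<bullet> ((c *\<^sub>R A) *v v)" using \<open>A \<in> psd\<close> \<open>c \<ge> 0\<close> by (simp add: psd_def)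
  qed
qed

lemma closed_psd: "closed (psd :: (real^'n^'n) set)"
proof -
  have eq: "psd = {A::real^'n^'n. \<forall>i j. A $ i $ j = A $ j $ i} \<inter> {A. \<forall>v. 0 \<le> v \<bullet> (A *v v)}"
    by (auto simp: psd_def vec_eq_iff transpose_def)
  have c1: "closed {A::real^'n^'n. \<forall>i j. A $ i $ j = A $ j $ i}"
    by (intro closed_Collect_all closed_Collect_eq continuous_intros)
  have c2: "closed {A::real^'n^'n. \<forall>v. 0 \<le> v \<bullet> (A *v v)}"
  proof (intro closed_Collect_all closed_Collect_le continuous_on_const)
    fix v :: "real^'n"
    have "linear (\<lambda>A::real^'n^'n. v \<bullet> (A *v v))"
      by (rule linearI) (simp_all add: matrix_vector_mult_add_rdistrib inner_add_right
          scaleR_matrix_vector_assoc[symmetric])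
    then show "continuous_on UNIV (\<lambda>A::real^'n^'n. v \<bullet> (A *v v))"
      by (simp add: linear_continuous_on linear_conv_bounded_linear)
  qed
  show ?thesis unfolding eq by (rule closed_Int[OF c1 c2])
qed

lemma sets_unifU[simp]: "sets unifU = sets borel"
  by (simp add: unifU_def)

lemma space_unifU[simp]: "space unifU = UNIV"
  by (simp add: unifU_def)

lemma prob_unifU: "prob_space unifU"
  unfolding unifU_def by (rule prob_space_uniform_measure) auto

lemma meas_unifU: "measurable unifU N = measurable borel N"
  by (rule measurable_cong_sets) simp_all

lemma AE_unifU: "AE u in unifU. u \<in> {0..<1}"
  unfolding unifU_def by (subst AE_uniform_measure) auto

lemma W1_le:
  fixes F G :: "real \<Rightarrow> real^'n^'n"
  assumes F: "F \<in> borel_measurable borel" and G: "G \<in> borel_measurable borel"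
    and b: "\<And>u. norm (F u - G u) \<le> c"
  shows "W1 (distr unifU borel F) (distr unifU borel G) \<le> ennreal c"
proof -
  interpret prob_space unifU by (rule prob_unifU)
  have F': "F \<in> measurable unifU borel" and G': "G \<in> measurable unifU borel"
    using F G by (simp_all only: meas_unifU)
  have P: "(\<lambda>u. (F u, G u)) \<in> measurable unifU (borel \<Otimes>\<^sub>M borel)"
    using F' G' by (rule measurable_Pair)
  define \<pi> where "\<pi> = distr unifU (borel \<Otimes>\<^sub>M borel) (\<lambda>u. (F u, G u))"
  have M: "(\<lambda>z::(real^'n^'n) \<times> (real^'n^'n). ennreal (norm (fst z - snd z))) \<in> borel_measurable (borel \<Otimes>\<^sub>M borel)"
  proof -
    have "(\<lambda>z. norm (fst z - snd z)) \<in> borel_measurable (borel :: (_ \<times> (real^'n^'n)) measure)"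
      by (intro borel_measurable_continuous_onI continuous_intros)
    then have "(\<lambda>z. norm (fst z - snd z)) \<in> borel_measurable (borel \<Otimes>\<^sub>M (borel :: (real^'n^'n) measure))"
      by (simp only: borel_prod)
    from measurable_compose[OF this measurable_ennreal] show ?thesis by simp
  qed
  have "prob_space \<pi>" unfolding \<pi>_def by (rule prob_space_distr[OF P])
  moreover have "sets \<pi> = sets (borel \<Otimes>\<^sub>M borel)" by (simp add: \<pi>_def)
  moreover have "distr \<pi> borel fst = distr unifU borel F"
  proof -
    have e: "fst \<circ> (\<lambda>u. (F u, G u)) = F" by (simp add: fun_eq_iff)
    show ?thesis unfolding \<pi>_def by (simp only: distr_distr[OF measurable_fst P] e)
  qed
  moreover have "distr \<pi> borel snd = distr unifU borel G"
  proof -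
    have e: "snd \<circ> (\<lambda>u. (F u, G u)) = G" by (simp add: fun_eq_iff)
    show ?thesis unfolding \<pi>_def by (simp only: distr_distr[OF measurable_snd P] e)
  qed
  ultimately have mem: "\<pi> \<in> {\<pi>. prob_space \<pi> \<and> sets \<pi> = sets (borel \<Otimes>\<^sub>M borel) \<and>
        distr \<pi> borel fst = distr unifU borel F \<and> distr \<pi> borel snd = distr unifU borel G}"
    by simp
  have "W1 (distr unifU borel F) (distr unifU borel G) \<le> (\<integral>\<^sup>+ z. ennreal (norm (fst z - snd z)) \<partial>\<pi>)"
    unfolding W1_def by (rule INF_lower[OF mem])
  also have "\<dots> = (\<integral>\<^sup>+ u. ennreal (norm (F u - G u)) \<partial>unifU)"
    unfolding \<pi>_def by (subst nn_integral_distr[OF P]) (simp_all add: M)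
  also have "\<dots> \<le> (\<integral>\<^sup>+ u. ennreal c \<partial>unifU)"
    by (rule nn_integral_mono) (simp add: b ennreal_leI)
  also have "\<dots> = ennreal c" using emeasure_space_1 by simp
  finally show ?thesis .
qed

lemma full_grad_xi_a:
  fixes \<xi> :: "real^'n^'n \<Rightarrow> real"
  assumes "\<xi> differentiable at x"
  shows "full_grad (xi_a \<xi> \<alpha>) x = full_grad \<xi> x + (2*\<alpha>) *\<^sub>R x"
proof -
  obtain D where D: "(\<xi> has_derivative D) (at x)" using assms unfolding differentiable_def by blast
  have "((\<lambda>y. \<xi> y + \<alpha> * (y \<bullet> y)) has_derivative (\<lambda>h. D h + \<alpha> * (h \<bullet> x + x \<bullet> h))) (at x)"
  proof -
    have d1: "((\<lambda>y. y \<bullet> y) has_derivative (\<lambda>h. x \<bullet> h + h \<bullet> x)) (at x)"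
      by (rule has_derivative_inner[OF has_derivative_ident has_derivative_ident])
    have d2: "((\<lambda>y. \<alpha> * (y \<bullet> y)) has_derivative (\<lambda>h. \<alpha> * (x \<bullet> h + h \<bullet> x))) (at x)"
      by (rule has_derivative_mult_right[OF d1])
    have d3: "((\<lambda>y. \<xi> y + \<alpha> * (y \<bullet> y)) has_derivative (\<lambda>h. D h + \<alpha> * (x \<bullet> h + h \<bullet> x))) (at x)"
      by (rule has_derivative_add[OF D d2])
    have e: "(\<lambda>h. D h + \<alpha> * (x \<bullet> h + h \<bullet> x)) = (\<lambda>h. D h + \<alpha> * (h \<bullet> x + x \<bullet> h))"
      by (rule ext) (simp only: add.commute)
    show ?thesis using d3 unfolding e .
  qed
  note d = this
  have eq: "xi_a \<xi> \<alpha> = (\<lambda>y. \<xi> y + \<alpha> * (y \<bullet> y))"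
    by (rule ext) (simp only: xi_a_def power2_norm_eq_inner)
  have f1: "frechet_derivative (xi_a \<xi> \<alpha>) (at x) = (\<lambda>h. D h + \<alpha> * (h \<bullet> x + x \<bullet> h))"
    unfolding eq by (rule frechet_derivative_at[symmetric]) (rule d)
  have f2: "frechet_derivative \<xi> (at x) = D" by (rule frechet_derivative_at[symmetric]) (rule D)
  show ?thesis
    by (simp add: full_grad_def vec_eq_iff inner_axis inner_axis' f1 f2)
qed

lemma sgrad_xi_a:
  fixes \<xi> :: "real^'n^'n \<Rightarrow> real"
  assumes "\<xi> differentiable at x"
  shows "sgrad (xi_a \<xi> \<alpha>) x = sgrad \<xi> x + \<alpha> *\<^sub>R (x + transpose x)"
  using full_grad_xi_a[OF assms, of \<alpha>]
  unfolding sgrad_def vec_eq_iff transpose_def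
  by (simp add: distrib_left)

lemma Lip0_props:
  fixes g :: "real^'n^'n \<Rightarrow> real"
  assumes "g \<in> Lip0"
  shows "continuous_on psd g" "g \<in> borel_measurable borel"
    "\<And>x y. x \<in> psd \<Longrightarrow> y \<in> psd \<Longrightarrow> \<bar>g x - g y\<bar> \<le> norm (x - y)"
    "\<And>x. x \<in> psd \<Longrightarrow> \<bar>g x\<bar> \<le> norm x"
proof -
  have L: "1-lipschitz_on psd g" and g0: "g 0 = 0" and go: "\<And>x. x \<notin> psd \<Longrightarrow> g x = 0"
    using assms by (auto simp: Lip0_def)
  show c: "continuous_on psd g" using L by (rule lipschitz_on_continuous_on)
  have "g = (\<lambda>x. if x \<in> psd then g x else (\<lambda>_. 0) x)" using go by auto
  moreover have "(\<lambda>x. if x \<in> psd then g x else (\<lambda>_. 0) x) \<in> borel_measurable borel"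
    by (rule borel_measurable_continuous_on_if[OF _ c continuous_on_const])
      (simp add: closed_psd borel_closed)
  ultimately show "g \<in> borel_measurable borel" by simp
  show d: "\<And>x y. x \<in> psd \<Longrightarrow> y \<in> psd \<Longrightarrow> \<bar>g x - g y\<bar> \<le> norm (x - y)"
    using lipschitz_onD[OF L] by (simp add: dist_real_def dist_norm)
  show "\<And>x. x \<in> psd \<Longrightarrow> \<bar>g x\<bar> \<le> norm x"
    using d[OF _ psd_0] g0 by simp
qed

lemma continuous_transpose: "continuous_on UNIV (transpose :: real^'n^'n \<Rightarrow> real^'n^'n)"
  unfolding transpose_def by (intro continuous_intros)

locale ctx =
  fixes \<xi> :: "real^'n^'n \<Rightarrow> real" and \<psi> :: "(real^'n^'n) measure \<Rightarrow> real"
  assumes diff: "\<forall>x. \<xi> differentiable at x" and gcont: "continuous_on UNIV (full_grad \<xi>)"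
    and grad_psd: "\<forall>x\<in>psd. sgrad \<xi> x \<in> psd"
    and grad_mono: "\<forall>x\<in>psd. \<forall>y\<in>psd. loewner_le x y \<longrightarrow> loewner_le (sgrad \<xi> x) (sgrad \<xi> y)"
    and psi_lip: "\<forall>\<mu>\<in>monotone_measures. \<forall>\<nu>\<in>monotone_measures.
                    ennreal \<bar>\<psi> \<mu> - \<psi> \<nu>\<bar> \<le> W1 \<mu> \<nu>"
begin

definition Fa :: "real \<Rightarrow> real^'n^'n \<Rightarrow> real^'n^'n" where
  "Fa \<alpha> x = sgrad \<xi> x + (2*\<alpha>) *\<^sub>R x"

lemma sgrad_sym: "transpose x = x \<Longrightarrow> sgrad (xi_a \<xi> \<alpha>) x = Fa \<alpha> x"
proof -
  assume "transpose x = x"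
  moreover have "\<alpha> *\<^sub>R (x + x) = (2*\<alpha>) *\<^sub>R x" unfolding scaleR_2[symmetric] by (simp add: mult.commute)
  ultimately show ?thesis using sgrad_xi_a[of \<xi> x \<alpha>] diff by (simp add: Fa_def)
qed

lemma cont_sgrad: "continuous_on UNIV (sgrad \<xi>)"
proof -
  have "continuous_on UNIV (\<lambda>x. transpose (full_grad \<xi> x))"
    using continuous_on_compose2[OF continuous_transpose gcont] by simp
  then show ?thesis unfolding sgrad_def[abs_def]
    by (intro continuous_on_scaleR continuous_on_add continuous_on_const gcont)
qed

lemma cont_Fa: "continuous_on UNIV (Fa \<alpha>)"
  unfolding Fa_def[abs_def] by (intro continuous_intros cont_sgrad)

lemma Fa_psd: "x \<in> psd \<Longrightarrow> \<alpha> \<ge> 0 \<Longrightarrow> Fa \<alpha> x \<in> psd"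
  unfolding Fa_def using grad_psd by (metis psd_add psd_scale mult_nonneg_nonneg zero_le_numeral)

lemma Fa_mono:
  assumes "x \<in> psd" "y \<in> psd" "loewner_le x y" "\<alpha> \<ge> 0"
  shows "loewner_le (Fa \<alpha> x) (Fa \<alpha> y)"
proof -
  have "Fa \<alpha> y - Fa \<alpha> x = (sgrad \<xi> y - sgrad \<xi> x) + (2*\<alpha>) *\<^sub>R (y - x)"
    by (simp add: Fa_def algebra_simps)
  moreover have "sgrad \<xi> y - sgrad \<xi> x \<in> psd" using grad_mono assms by (auto simp: loewner_le_def)
  moreover have "y - x \<in> psd" using assms by (simp add: loewner_le_def)
  ultimately show ?thesis using assms(4) by (simp add: loewner_le_def psd_add psd_scale)
qed

lemma Fa_diff: "norm (Fa \<alpha> x - Fa \<beta> x) = 2 * \<bar>\<alpha> - \<beta>\<bar> * norm x"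
proof -
  have "Fa \<alpha> x - Fa \<beta> x = (2 * (\<alpha> - \<beta>)) *\<^sub>R x" by (simp add: Fa_def algebra_simps)
  then show ?thesis by (simp only: norm_scaleR abs_mult)
qed

lemma theta_sym: "transpose x = x \<Longrightarrow> theta_a \<xi> \<alpha> x = x \<bullet> Fa \<alpha> x - \<xi> x - \<alpha> * (norm x)\<^sup>2"
  by (simp add: theta_a_def sgrad_sym xi_a_def)

lemma sgrad_bound: "\<exists>B\<ge>0. \<forall>x. norm x \<le> 1 \<longrightarrow> norm (sgrad \<xi> x) \<le> B"
proof -
  have "compact (sgrad \<xi> ` cball 0 1)"
    by (rule compact_continuous_image[OF continuous_on_subset[OF cont_sgrad]]) auto
  then obtain B where B: "\<forall>y\<in>sgrad \<xi> ` cball 0 1. norm y \<le> B"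
    using compact_imp_bounded[OF \<open>compact (sgrad \<xi> ` cball 0 1)\<close>] unfolding bounded_iff by blast
  show ?thesis
    by (rule exI[of _ "max B 0"]) (use B in \<open>auto simp: mem_cball_0 le_max_iff_disj\<close>)
qed

end

context ctx begin

definition Q :: "(real \<Rightarrow> real^'n^'n) set" where
  "Q = {q. q \<in> mono_paths \<and> (\<forall>u. norm (q u) \<le> 1)}"

definition mu :: "real \<Rightarrow> (real \<Rightarrow> real^'n^'n) \<Rightarrow> (real^'n^'n) measure" where
  "mu \<alpha> q = distr unifU borel (\<lambda>u. Fa \<alpha> (q u))"

lemma Q_psd: "q \<in> Q \<Longrightarrow> q u \<in> psd"
  by (cases "u \<in> {0..<1}") (auto simp: Q_def mono_paths_def psd_0)

lemma Q_norm: "q \<in> Q \<Longrightarrow> norm (q u) \<le> 1"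
  by (simp add: Q_def)

lemma Q_meas: "q \<in> Q \<Longrightarrow> q \<in> borel_measurable borel"
  by (simp add: Q_def mono_paths_def)

lemma Fa_meas: "q \<in> Q \<Longrightarrow> (\<lambda>u. Fa \<alpha> (q u)) \<in> borel_measurable borel"
  by (rule borel_measurable_continuous_on[OF cont_Fa Q_meas])

lemma q0_Q: "(\<lambda>u. 0) \<in> Q"
  by (auto simp: Q_def mono_paths_def psd_0 loewner_le_def)

lemma P_up_eq: "P_up \<xi> \<alpha> = (\<lambda>q. mu \<alpha> q) ` Q"
proof -
  have "\<And>q. q \<in> Q \<Longrightarrow> distr unifU borel (\<lambda>u. sgrad (xi_a \<xi> \<alpha>) (q u)) = mu \<alpha> q"
    unfolding mu_def using Q_psd psd_sym sgrad_sym by metis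
  then show ?thesis unfolding P_up_def Q_def by (auto simp: image_def) metis
qed

lemma Fa_bound: "\<exists>B\<ge>0. \<forall>x \<alpha>. norm x \<le> 1 \<longrightarrow> norm (Fa \<alpha> x) \<le> B + 2 * \<bar>\<alpha>\<bar>"
proof -
  obtain B where B: "B \<ge> 0" "\<And>x. norm x \<le> 1 \<Longrightarrow> norm (sgrad \<xi> x) \<le> B"
    using sgrad_bound by blast
  have "norm (Fa \<alpha> x) \<le> B + 2 * \<bar>\<alpha>\<bar>" if "norm x \<le> 1" for x \<alpha>
  proof -
    have "norm (Fa \<alpha> x) \<le> norm (sgrad \<xi> x) + norm ((2*\<alpha>) *\<^sub>R x)"
      unfolding Fa_def by (rule norm_triangle_ineq)
    also have "norm ((2*\<alpha>) *\<^sub>R x) \<le> 2 * \<bar>\<alpha>\<bar>"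
      using that by (simp add: abs_mult mult_left_le)
    finally show ?thesis using B(2)[OF that] by linarith
  qed
  then show ?thesis using B(1) by blast
qed

lemma mu_mono:
  assumes q: "q \<in> Q" and a: "\<alpha> \<ge> 0"
  shows "mu \<alpha> q \<in> monotone_measures"
proof -
  define q' where "q' u = (if u \<in> {0..<1} then Fa \<alpha> (q u) else 0)" for u
  have m: "(\<lambda>u. Fa \<alpha> (q u)) \<in> borel_measurable borel" by (rule Fa_meas[OF q])
  have qm: "q' \<in> borel_measurable borel"
    unfolding q'_def[abs_def] by (rule measurable_If_set[OF m measurable_const]) measurable
  have qpsd: "\<forall>u\<in>{0..<1}. q' u \<in> psd" using Fa_psd[OF Q_psd[OF q] a] by (simp add: q'_def)
  have qmono: "\<forall>u v. 0 \<le> u \<longrightarrow> u \<le> v \<longrightarrow> v < 1 \<longrightarrow> loewner_le (q' u) (q' v)"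
  proof (intro allI impI)
    fix u v :: real assume uv: "0 \<le> u" "u \<le> v" "v < 1"
    have "loewner_le (q u) (q v)" using q uv by (auto simp: Q_def mono_paths_def)
    then show "loewner_le (q' u) (q' v)" using uv Fa_mono[OF Q_psd[OF q] Q_psd[OF q] _ a]
      by (simp add: q'_def)
  qed
  have qcont: "\<forall>u\<in>{0..<1}. continuous (at_right u) q'"
  proof
    fix u :: real assume u: "u \<in> {0..<1}"
    have "continuous (at_right u) q" using q u by (auto simp: Q_def mono_paths_def)
    then have "(q \<longlongrightarrow> q u) (at_right u)" by (simp add: continuous_within)
    moreover have "isCont (Fa \<alpha>) (q u)"
      using cont_Fa by (simp add: continuous_on_eq_continuous_at)
    ultimately have "((\<lambda>v. Fa \<alpha> (q v)) \<longlongrightarrow> Fa \<alpha> (q u)) (at_right u)"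
      by (rule isCont_tendsto_compose[rotated])
    moreover have "eventually (\<lambda>v. Fa \<alpha> (q v) = q' v) (at_right u)"
    proof -
      have "eventually (\<lambda>v. v \<in> {u<..<1}) (at_right u)"
        using u by (intro eventually_at_right_real) auto
      then show ?thesis
        by eventually_elim (use u in \<open>auto simp: q'_def\<close>)
    qed
    ultimately have "(q' \<longlongrightarrow> Fa \<alpha> (q u)) (at_right u)" by (rule Lim_transform_eventually)
    then show "continuous (at_right u) q'" using u by (simp add: continuous_within q'_def)
  qed
  have qpath: "q' \<in> mono_paths"
    unfolding mono_paths_def using qm qpsd qmono qcont by (auto simp: q'_def)
  obtain B where B: "B \<ge> 0" "\<And>x \<alpha>. norm x \<le> 1 \<Longrightarrow> norm (Fa \<alpha> x) \<le> B + 2 * \<bar>\<alpha>\<bar>"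
    using Fa_bound by blast
  interpret prob_space unifU by (rule prob_unifU)
  have I: "integrable unifU (\<lambda>u. norm (q' u))"
  proof (rule integrable_const_bound[where B="B + 2 * \<bar>\<alpha>\<bar>"])
    show "AE x in unifU. norm (norm (q' x)) \<le> B + 2 * \<bar>\<alpha>\<bar>"
      using B Q_norm[OF q] by (auto simp: q'_def)
    show "(\<lambda>u. norm (q' u)) \<in> borel_measurable unifU"
      using qm by (simp add: meas_unifU)
  qed
  have E: "distr unifU borel q' = mu \<alpha> q"
    unfolding mu_def
  proof (rule distr_cong_AE)
    show "AE x in unifU. q' x = Fa \<alpha> (q x)"
      using AE_unifU by eventually_elim (simp add: q'_def)
    show "q' \<in> unifU \<rightarrow>\<^sub>M borel" using qm by (simp add: meas_unifU)
    show "(\<lambda>u. Fa \<alpha> (q u)) \<in> unifU \<rightarrow>\<^sub>M borel" using m by (simp add: meas_unifU)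
  qed simp_all
  show ?thesis unfolding monotone_measures_def
    by (rule CollectI, rule exI[of _ q']) (simp add: E I qpath)
qed

end

context ctx begin

lemma psi_diff:
  assumes q: "q \<in> Q" and a: "\<alpha> \<ge> 0" and b: "\<beta> \<ge> 0"
  shows "\<bar>\<psi> (mu \<alpha> q) - \<psi> (mu \<beta> q)\<bar> \<le> 2 * \<bar>\<alpha> - \<beta>\<bar>"
proof -
  have "ennreal \<bar>\<psi> (mu \<alpha> q) - \<psi> (mu \<beta> q)\<bar> \<le> W1 (mu \<alpha> q) (mu \<beta> q)"
    using psi_lip mu_mono[OF q a] mu_mono[OF q b] by blast
  also have "\<dots> \<le> ennreal (2 * \<bar>\<alpha> - \<beta>\<bar>)"
    unfolding mu_def
  proof (rule W1_le[OF Fa_meas[OF q] Fa_meas[OF q]])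
    fix u
    have "norm (Fa \<alpha> (q u) - Fa \<beta> (q u)) = 2 * \<bar>\<alpha> - \<beta>\<bar> * norm (q u)" by (rule Fa_diff)
    also have "\<dots> \<le> 2 * \<bar>\<alpha> - \<beta>\<bar> * 1"
      using Q_norm[OF q] by (intro mult_left_mono) auto
    finally show "norm (Fa \<alpha> (q u) - Fa \<beta> (q u)) \<le> 2 * \<bar>\<alpha> - \<beta>\<bar>" by simp
  qed
  finally show ?thesis by simp
qed

lemma psi_upper:
  assumes a: "\<alpha> \<ge> 0"
  shows "\<exists>C. \<forall>q\<in>Q. \<psi> (mu \<alpha> q) \<le> C"
proof -
  obtain B where B: "B \<ge> 0" "\<And>x \<alpha>. norm x \<le> 1 \<Longrightarrow> norm (Fa \<alpha> x) \<le> B + 2 * \<bar>\<alpha>\<bar>"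
    using Fa_bound by blast
  have "\<psi> (mu \<alpha> q) \<le> \<psi> (mu \<alpha> (\<lambda>u. 0)) + 2 * (B + 2 * \<bar>\<alpha>\<bar>)" if q: "q \<in> Q" for q
  proof -
    have "ennreal \<bar>\<psi> (mu \<alpha> q) - \<psi> (mu \<alpha> (\<lambda>u. 0))\<bar> \<le> W1 (mu \<alpha> q) (mu \<alpha> (\<lambda>u. 0))"
      using psi_lip mu_mono[OF q a] mu_mono[OF q0_Q a] by blast
    also have "\<dots> \<le> ennreal (2 * (B + 2 * \<bar>\<alpha>\<bar>))"
      unfolding mu_def
    proof (rule W1_le[OF Fa_meas[OF q] Fa_meas[OF q0_Q]])
      fix u
      have "norm (Fa \<alpha> (q u) - Fa \<alpha> 0) \<le> norm (Fa \<alpha> (q u)) + norm (Fa \<alpha> 0)"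
        by (rule norm_triangle_ineq4)
      also have "\<dots> \<le> (B + 2 * \<bar>\<alpha>\<bar>) + (B + 2 * \<bar>\<alpha>\<bar>)"
        using B(2)[OF Q_norm[OF q]] B(2)[of 0] by (intro add_mono) auto
      finally show "norm (Fa \<alpha> (q u) - Fa \<alpha> 0) \<le> 2 * (B + 2 * \<bar>\<alpha>\<bar>)" by simp
    qed
    finally have X: "ennreal \<bar>\<psi> (mu \<alpha> q) - \<psi> (mu \<alpha> (\<lambda>u. 0))\<bar> \<le> ennreal (2 * (B + 2 * \<bar>\<alpha>\<bar>))" .
    have pos: "0 \<le> 2 * (B + 2 * \<bar>\<alpha>\<bar>)" using B(1) by simp
    have "\<bar>\<psi> (mu \<alpha> q) - \<psi> (mu \<alpha> (\<lambda>u. 0))\<bar> \<le> 2 * (B + 2 * \<bar>\<alpha>\<bar>)"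
      by (rule iffD1[OF ennreal_le_iff[OF pos] X])
    then show ?thesis by linarith
  qed
  then show ?thesis by blast
qed

definition I :: "real \<Rightarrow> (real^'n^'n \<Rightarrow> real) \<Rightarrow> (real \<Rightarrow> real^'n^'n) \<Rightarrow> real" where
  "I \<alpha> g q = (\<integral>u. g (Fa \<alpha> (q u)) \<partial>unifU)"

lemma int_eq:
  assumes g: "g \<in> Lip0" and q: "q \<in> Q"
  shows "integral\<^sup>L (mu \<alpha> q) g = I \<alpha> g q"
  unfolding mu_def I_def
  by (rule integral_distr) (simp_all add: meas_unifU Fa_meas[OF q] Lip0_props(2)[OF g])

lemma gFa_meas:
  assumes g: "g \<in> Lip0" and q: "q \<in> Q"
  shows "(\<lambda>u. g (Fa \<alpha> (q u))) \<in> borel_measurable unifU"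
  using measurable_compose[OF Fa_meas[OF q] Lip0_props(2)[OF g]] by (simp add: meas_unifU)

lemma int_integrable:
  assumes g: "g \<in> Lip0" and q: "q \<in> Q" and a: "\<alpha> \<ge> 0"
  shows "integrable unifU (\<lambda>u. g (Fa \<alpha> (q u)))"
proof -
  interpret prob_space unifU by (rule prob_unifU)
  obtain B where B: "B \<ge> 0" "\<And>x \<alpha>. norm x \<le> 1 \<Longrightarrow> norm (Fa \<alpha> x) \<le> B + 2 * \<bar>\<alpha>\<bar>"
    using Fa_bound by blast
  show ?thesis
  proof (rule integrable_const_bound[where B="B + 2 * \<bar>\<alpha>\<bar>"])
    show "AE x in unifU. norm (g (Fa \<alpha> (q x))) \<le> B + 2 * \<bar>\<alpha>\<bar>"
    proof (rule AE_I2)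
      fix x
      have "\<bar>g (Fa \<alpha> (q x))\<bar> \<le> norm (Fa \<alpha> (q x))"
        by (rule Lip0_props(4)[OF g Fa_psd[OF Q_psd[OF q] a]])
      also have "\<dots> \<le> B + 2 * \<bar>\<alpha>\<bar>" by (rule B(2)[OF Q_norm[OF q]])
      finally show "norm (g (Fa \<alpha> (q x))) \<le> B + 2 * \<bar>\<alpha>\<bar>" by simp
    qed
    show "(\<lambda>u. g (Fa \<alpha> (q u))) \<in> borel_measurable unifU" by (rule gFa_meas[OF g q])
  qed
qed

lemma int_diff:
  assumes g: "g \<in> Lip0" and q: "q \<in> Q" and a: "\<alpha> \<ge> 0" and b: "\<beta> \<ge> 0"
  shows "\<bar>I \<alpha> g q - I \<beta> g q\<bar> \<le> 2 * \<bar>\<alpha> - \<beta>\<bar>"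
proof -
  interpret prob_space unifU by (rule prob_unifU)
  have bd: "\<bar>g (Fa \<alpha> (q u)) - g (Fa \<beta> (q u))\<bar> \<le> 2 * \<bar>\<alpha> - \<beta>\<bar>" for u
  proof -
    have "\<bar>g (Fa \<alpha> (q u)) - g (Fa \<beta> (q u))\<bar> \<le> norm (Fa \<alpha> (q u) - Fa \<beta> (q u))"
      by (rule Lip0_props(3)[OF g Fa_psd[OF Q_psd[OF q] a] Fa_psd[OF Q_psd[OF q] b]])
    also have "\<dots> = 2 * \<bar>\<alpha> - \<beta>\<bar> * norm (q u)" by (rule Fa_diff)
    also have "\<dots> \<le> 2 * \<bar>\<alpha> - \<beta>\<bar> * 1"
      using Q_norm[OF q] by (intro mult_left_mono) auto
    finally show ?thesis by simp
  qed
  have ia: "integrable unifU (\<lambda>u. g (Fa \<alpha> (q u)))" by (rule int_integrable[OF g q a])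
  have ib: "integrable unifU (\<lambda>u. g (Fa \<beta> (q u)))" by (rule int_integrable[OF g q b])
  have eq: "I \<alpha> g q - I \<beta> g q = (\<integral>u. g (Fa \<alpha> (q u)) - g (Fa \<beta> (q u)) \<partial>unifU)"
    unfolding I_def by (rule Bochner_Integration.integral_diff[OF ia ib, symmetric])
  have id: "integrable unifU (\<lambda>u. g (Fa \<alpha> (q u)) - g (Fa \<beta> (q u)))"
    using ia ib by (rule Bochner_Integration.integrable_diff)
  have "(\<integral>u. g (Fa \<alpha> (q u)) - g (Fa \<beta> (q u)) \<partial>unifU) \<le> 2 * \<bar>\<alpha> - \<beta>\<bar>"
  proof (rule integral_le_const[OF id], rule AE_I2)
    fix u show "g (Fa \<alpha> (q u)) - g (Fa \<beta> (q u)) \<le> 2 * \<bar>\<alpha> - \<beta>\<bar>"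
      using bd[of u] by linarith
  qed
  moreover have "- (2 * \<bar>\<alpha> - \<beta>\<bar>) \<le> (\<integral>u. g (Fa \<alpha> (q u)) - g (Fa \<beta> (q u)) \<partial>unifU)"
  proof (rule integral_ge_const[OF id], rule AE_I2)
    fix u show "- (2 * \<bar>\<alpha> - \<beta>\<bar>) \<le> g (Fa \<alpha> (q u)) - g (Fa \<beta> (q u))"
      using bd[of u] by linarith
  qed
  ultimately show ?thesis unfolding eq by linarith
qed

lemma int_lower:
  assumes g: "g \<in> Lip0" and a: "\<alpha> \<ge> 0"
  shows "\<exists>C. \<forall>q\<in>Q. C \<le> I \<alpha> g q"
proof -
  interpret prob_space unifU by (rule prob_unifU)
  obtain B where B: "B \<ge> 0" "\<And>x \<alpha>. norm x \<le> 1 \<Longrightarrow> norm (Fa \<alpha> x) \<le> B + 2 * \<bar>\<alpha>\<bar>"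
    using Fa_bound by blast
  have "- (B + 2 * \<bar>\<alpha>\<bar>) \<le> I \<alpha> g q" if q: "q \<in> Q" for q
    unfolding I_def
  proof (rule integral_ge_const[OF int_integrable[OF g q a]], rule AE_I2)
    fix x
    have "\<bar>g (Fa \<alpha> (q x))\<bar> \<le> norm (Fa \<alpha> (q x))"
      by (rule Lip0_props(4)[OF g Fa_psd[OF Q_psd[OF q] a]])
    also have "\<dots> \<le> B + 2 * \<bar>\<alpha>\<bar>" by (rule B(2)[OF Q_norm[OF q]])
    finally show "- (B + 2 * \<bar>\<alpha>\<bar>) \<le> g (Fa \<alpha> (q x))" by linarith
  qed
  then show ?thesis by blast
qed

lemma psi_star_eq:
  assumes g: "g \<in> Lip0"
  shows "psi_star \<psi> \<xi> \<alpha> g = (INF q\<in>Q. I \<alpha> g q - \<psi> (mu \<alpha> q))"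
  unfolding psi_star_def P_up_eq image_image
  by (rule arg_cong[where f=Inf], rule image_cong[OF refl]) (simp add: int_eq[OF g])

lemma psi_star_bdd:
  assumes g: "g \<in> Lip0" and a: "\<alpha> \<ge> 0"
  shows "bdd_below ((\<lambda>q. I \<alpha> g q - \<psi> (mu \<alpha> q)) ` Q)"
proof -
  obtain C1 where C1: "\<forall>q\<in>Q. \<psi> (mu \<alpha> q) \<le> C1" using psi_upper[OF a] by blast
  obtain C2 where C2: "\<forall>q\<in>Q. C2 \<le> I \<alpha> g q" using int_lower[OF g a] by blast
  show ?thesis by (rule bdd_belowI2[where m="C2 - C1"]) (use C1 C2 in force)
qed

lemma psi_star_diff:
  assumes g: "g \<in> Lip0" and a: "\<alpha> \<ge> 0" and b: "\<beta> \<ge> 0"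
  shows "\<bar>psi_star \<psi> \<xi> \<alpha> g - psi_star \<psi> \<xi> \<beta> g\<bar> \<le> 4 * \<bar>\<alpha> - \<beta>\<bar>"
  unfolding psi_star_eq[OF g]
proof (rule INF_diff_le(2))
  show "Q \<noteq> {}" using q0_Q by blast
  show "bdd_below ((\<lambda>q. I \<alpha> g q - \<psi> (mu \<alpha> q)) ` Q)" by (rule psi_star_bdd[OF g a])
  fix q assume q: "q \<in> Q"
  show "\<bar>I \<alpha> g q - \<psi> (mu \<alpha> q) - (I \<beta> g q - \<psi> (mu \<beta> q))\<bar> \<le> 4 * \<bar>\<alpha> - \<beta>\<bar>"
    using int_diff[OF g q a b] psi_diff[OF q a b] by linarith
qed

end

context ctx begin

definition K :: "(real^'n^'n) set" where "K = cball 0 1 \<inter> psd"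

definition hS :: "real \<Rightarrow> real \<Rightarrow> (real^'n^'n \<Rightarrow> real) \<Rightarrow> real^'n^'n \<Rightarrow> real" where
  "hS t \<alpha> g x = g (t *\<^sub>R Fa \<alpha> x) - t * (x \<bullet> Fa \<alpha> x - \<xi> x - \<alpha> * (norm x)\<^sup>2)"

lemma S_eq: "S_tilde \<xi> \<alpha> t g = (SUP x\<in>K. hS t \<alpha> g x)"
  unfolding S_tilde_def K_def
  by (rule arg_cong[where f=Sup], rule image_cong[OF refl])
    (simp add: hS_def sgrad_sym theta_sym psd_sym)

lemma K0: "0 \<in> K" by (simp add: K_def psd_0)

lemma compact_K: "compact K"
  unfolding K_def by (rule compact_Int_closed[OF compact_cball closed_psd])

lemma cont_xi: "continuous_on UNIV \<xi>"
  using diff by (simp add: continuous_at_imp_continuous_on differentiable_imp_continuous_within)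

lemma S_bdd:
  assumes g: "g \<in> Lip0" and a: "\<alpha> \<ge> 0" and t: "t \<ge> 0"
  shows "bdd_above (hS t \<alpha> g ` K)"
proof -
  have c1: "continuous_on K (\<lambda>x. t *\<^sub>R Fa \<alpha> x)"
    by (intro continuous_intros continuous_on_subset[OF cont_Fa]) simp
  have im: "(\<lambda>x. t *\<^sub>R Fa \<alpha> x) ` K \<subseteq> psd"
    using Fa_psd a t psd_scale by (auto simp: K_def)
  have c2: "continuous_on K (\<lambda>x. g (t *\<^sub>R Fa \<alpha> x))"
    by (rule continuous_on_compose2[OF Lip0_props(1)[OF g] c1 im])
  have c3: "continuous_on K (\<lambda>x. x \<bullet> Fa \<alpha> x - \<xi> x - \<alpha> * (norm x)\<^sup>2)"
    by (intro continuous_intros continuous_on_subset[OF cont_Fa] continuous_on_subset[OF cont_xi]) simp_all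
  have "continuous_on K (hS t \<alpha> g)"
    unfolding hS_def[abs_def] by (intro continuous_intros c2 c3)
  then have "compact (hS t \<alpha> g ` K)" by (rule compact_continuous_image[OF _ compact_K])
  then show ?thesis by (intro bounded_imp_bdd_above compact_imp_bounded)
qed

lemma S_diff:
  assumes g: "g \<in> Lip0" and a: "\<alpha> \<ge> 0" and b: "\<beta> \<ge> 0" and t: "t \<ge> 0" and x: "x \<in> K"
  shows "\<bar>hS t \<alpha> g x - hS t \<beta> g x\<bar> \<le> 3 * t * \<bar>\<alpha> - \<beta>\<bar>"
proof -
  have xp: "x \<in> psd" and xn: "norm x \<le> 1" using x by (auto simp: K_def)
  have e: "Fa \<alpha> x - Fa \<beta> x = (2 * (\<alpha> - \<beta>)) *\<^sub>R x" by (simp add: Fa_def algebra_simps)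
  have n2: "(norm x)\<^sup>2 \<le> 1" using xn norm_ge_zero by (metis power_le_one one_power2)
  have n2': "0 \<le> (norm x)\<^sup>2" by simp
  have "\<bar>g (t *\<^sub>R Fa \<alpha> x) - g (t *\<^sub>R Fa \<beta> x)\<bar> \<le> norm (t *\<^sub>R Fa \<alpha> x - t *\<^sub>R Fa \<beta> x)"
    by (rule Lip0_props(3)[OF g psd_scale[OF Fa_psd[OF xp a] t] psd_scale[OF Fa_psd[OF xp b] t]])
  also have "\<dots> = t * (2 * \<bar>\<alpha> - \<beta>\<bar> * norm x)"
    using t by (simp add: scaleR_diff_right[symmetric] Fa_diff)
  also have "\<dots> \<le> t * (2 * \<bar>\<alpha> - \<beta>\<bar> * 1)"
    using t xn by (intro mult_left_mono) auto
  finally have d1: "\<bar>g (t *\<^sub>R Fa \<alpha> x) - g (t *\<^sub>R Fa \<beta> x)\<bar> \<le> 2 * t * \<bar>\<alpha> - \<beta>\<bar>" by simp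
  have "(x \<bullet> Fa \<alpha> x - \<xi> x - \<alpha> * (norm x)\<^sup>2) - (x \<bullet> Fa \<beta> x - \<xi> x - \<beta> * (norm x)\<^sup>2)
      = x \<bullet> (Fa \<alpha> x - Fa \<beta> x) - (\<alpha> - \<beta>) * (norm x)\<^sup>2"
    by (simp add: inner_diff_right algebra_simps)
  also have "\<dots> = (\<alpha> - \<beta>) * (norm x)\<^sup>2"
    unfolding e by (simp add: power2_norm_eq_inner)
  finally have e2: "(x \<bullet> Fa \<alpha> x - \<xi> x - \<alpha> * (norm x)\<^sup>2) - (x \<bullet> Fa \<beta> x - \<xi> x - \<beta> * (norm x)\<^sup>2)
      = (\<alpha> - \<beta>) * (norm x)\<^sup>2" .
  have "\<bar>(\<alpha> - \<beta>) * (norm x)\<^sup>2\<bar> \<le> \<bar>\<alpha> - \<beta>\<bar>"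
    using n2 n2' by (simp add: abs_mult mult_left_le)
  then have d2: "\<bar>t * (x \<bullet> Fa \<alpha> x - \<xi> x - \<alpha> * (norm x)\<^sup>2) - t * (x \<bullet> Fa \<beta> x - \<xi> x - \<beta> * (norm x)\<^sup>2)\<bar>
      \<le> t * \<bar>\<alpha> - \<beta>\<bar>"
    using t e2 by (simp add: right_diff_distrib[symmetric] abs_mult mult_left_mono)
  show ?thesis unfolding hS_def using d1 d2 by linarith
qed

lemma S_tilde_diff:
  assumes g: "g \<in> Lip0" and a: "\<alpha> \<ge> 0" and b: "\<beta> \<ge> 0" and t: "t \<ge> 0"
  shows "\<bar>S_tilde \<xi> \<alpha> t g - S_tilde \<xi> \<beta> t g\<bar> \<le> 3 * t * \<bar>\<alpha> - \<beta>\<bar>"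
  unfolding S_eq
  by (rule SUP_diff_le(2)[OF _ S_bdd[OF g a t] S_diff[OF g a b t]]) (use K0 in auto)

lemma Lip0_nonempty: "(\<lambda>x. 0) \<in> Lip0"
  by (simp add: Lip0_def lipschitz_on_def)

lemma A_lower:
  assumes a: "\<alpha> \<ge> 0" and t: "t \<ge> 0"
  shows "bdd_below ((\<lambda>g. S_tilde \<xi> \<alpha> t g - psi_star \<psi> \<xi> \<alpha> g) ` Lip0)"
proof (rule bdd_belowI2[where m="- \<bar>t - 1\<bar> * norm (sgrad \<xi> 0) + t * \<xi> 0 + \<psi> (mu \<alpha> (\<lambda>u. 0))"])
  fix g :: "real^'n^'n \<Rightarrow> real" assume g: "g \<in> Lip0"
  interpret prob_space unifU by (rule prob_unifU)
  have F0: "Fa \<alpha> 0 = sgrad \<xi> 0" by (simp add: Fa_def)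
  have c0: "sgrad \<xi> 0 \<in> psd" using grad_psd psd_0 by blast
  have "hS t \<alpha> g 0 \<le> S_tilde \<xi> \<alpha> t g"
    unfolding S_eq by (rule cSUP_upper[OF K0 S_bdd[OF g a t]])
  moreover have "hS t \<alpha> g 0 = g (t *\<^sub>R sgrad \<xi> 0) + t * \<xi> 0"
    by (simp add: hS_def F0)
  moreover have "psi_star \<psi> \<xi> \<alpha> g \<le> I \<alpha> g (\<lambda>u. 0) - \<psi> (mu \<alpha> (\<lambda>u. 0))"
    unfolding psi_star_eq[OF g] by (rule cINF_lower[OF psi_star_bdd[OF g a] q0_Q])
  moreover have "I \<alpha> g (\<lambda>u. 0) = g (sgrad \<xi> 0)"
    using prob_space by (simp add: I_def F0)
  moreover have "\<bar>g (t *\<^sub>R sgrad \<xi> 0) - g (sgrad \<xi> 0)\<bar> \<le> \<bar>t - 1\<bar> * norm (sgrad \<xi> 0)"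
  proof -
    have "\<bar>g (t *\<^sub>R sgrad \<xi> 0) - g (sgrad \<xi> 0)\<bar> \<le> norm (t *\<^sub>R sgrad \<xi> 0 - sgrad \<xi> 0)"
      by (rule Lip0_props(3)[OF g psd_scale[OF c0 t] c0])
    also have "t *\<^sub>R sgrad \<xi> 0 - sgrad \<xi> 0 = (t - 1) *\<^sub>R sgrad \<xi> 0" by (simp add: algebra_simps)
    finally show ?thesis by simp
  qed
  ultimately show "- \<bar>t - 1\<bar> * norm (sgrad \<xi> 0) + t * \<xi> 0 + \<psi> (mu \<alpha> (\<lambda>u. 0))
      \<le> S_tilde \<xi> \<alpha> t g - psi_star \<psi> \<xi> \<alpha> g"
    by linarith
qed

lemma main:
  assumes t: "t \<ge> 0"
  shows "(3 * t + 4)-lipschitz_on {0..} (\<lambda>\<alpha>. INF g\<in>Lip0. S_tilde \<xi> \<alpha> t g - psi_star \<psi> \<xi> \<alpha> g)"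
proof (rule lipschitz_onI)
  show "0 \<le> 3 * t + 4" using t by simp
  fix \<alpha> \<beta> :: real assume a: "\<alpha> \<in> {0..}" and b: "\<beta> \<in> {0..}"
  then have a: "\<alpha> \<ge> 0" and b: "\<beta> \<ge> 0" by auto
  have "\<bar>(INF g\<in>Lip0. S_tilde \<xi> \<alpha> t g - psi_star \<psi> \<xi> \<alpha> g)
        - (INF g\<in>Lip0. S_tilde \<xi> \<beta> t g - psi_star \<psi> \<xi> \<beta> g)\<bar> \<le> (3 * t + 4) * \<bar>\<alpha> - \<beta>\<bar>"
  proof (rule INF_diff_le(2))
    show "Lip0 \<noteq> {}" using Lip0_nonempty by blast
    show "bdd_below ((\<lambda>g. S_tilde \<xi> \<alpha> t g - psi_star \<psi> \<xi> \<alpha> g) ` Lip0)" by (rule A_lower[OF a t])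
    fix g :: "real^'n^'n \<Rightarrow> real" assume g: "g \<in> Lip0"
    show "\<bar>S_tilde \<xi> \<alpha> t g - psi_star \<psi> \<xi> \<alpha> g - (S_tilde \<xi> \<beta> t g - psi_star \<psi> \<xi> \<beta> g)\<bar>
        \<le> (3 * t + 4) * \<bar>\<alpha> - \<beta>\<bar>"
      using S_tilde_diff[OF g a b t] psi_star_diff[OF g a b] by (simp add: algebra_simps)
  qed
  then show "dist (INF g\<in>Lip0. S_tilde \<xi> \<alpha> t g - psi_star \<psi> \<xi> \<alpha> g)
        (INF g\<in>Lip0. S_tilde \<xi> \<beta> t g - psi_star \<psi> \<xi> \<beta> g) \<le> (3 * t + 4) * dist \<alpha> \<beta>"
    by (simp add: dist_real_def)
qed

end

theorem proposition6p4:
  fixes \<xi> :: "real^'n^'n \<Rightarrow> real"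
    and \<psi> :: "(real^'n^'n) measure \<Rightarrow> real"
    and t :: real
  assumes power_series: "\<exists>c::(('n \<times> 'n \<Rightarrow> nat) \<Rightarrow> real). \<forall>x. (\<lambda>k. norm (c k * monom_mat x k)) summable_on UNIV
                                 \<and> \<xi> x = (\<Sum>\<^sub>\<infinity>k. c k * monom_mat x k)"
    and smooth: "\<forall>x. \<xi> differentiable at x" "continuous_on UNIV (full_grad \<xi>)"
    and convex: "convex_on psd \<xi>"
    and grad_psd: "\<forall>x\<in>psd. sgrad \<xi> x \<in> psd"
    and grad_mono: "\<forall>x\<in>psd. \<forall>y\<in>psd. loewner_le x y \<longrightarrow> loewner_le (sgrad \<xi> x) (sgrad \<xi> y)"
    and psi_lip: "\<forall>\<mu>\<in>monotone_measures. \<forall>\<nu>\<in>monotone_measures.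
                    ennreal \<bar>\<psi> \<mu> - \<psi> \<nu>\<bar> \<le> W1 \<mu> \<nu>"
    and t: "t \<ge> 0"
  shows "\<exists>L. L-lipschitz_on {0..}
           (\<lambda>\<alpha>. INF g\<in>Lip0. S_tilde \<xi> \<alpha> t g - psi_star \<psi> \<xi> \<alpha> g)"
proof -
  interpret ctx \<xi> \<psi>
    by (unfold_locales) (use smooth grad_psd grad_mono psi_lip in auto)
  show ?thesis using main[OF t] by blast
qed

end
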